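(* Let $p>0$ and $m,n>\max(p+1,2)$ be integers. Then \begin{align*} \zeta_{G_{m,n,p}}(u)^{-1}=&-4u^{2m+2n-2p}+u^{2m+2n-4p}+2u^{m+2n-2p}+2u^{2m+n-2p}\\ &+u^{2n}+u^{2m}+2u^{m+n}-2u^{m+n-2p}-2u^{n}-2u^{m}+1. \end{align*}
   Context: For integers $p>0$ and $m,n>\max(p+1,2)$, $G_{m,n,p}$ is the graph obtained from a cycle $C_m$ and a cycle $C_n$ by identifying a path of $p$ consecutive edges of $C_m$ with a path of $p$ consecutive edges of $C_n$; equivalently, it consists of two distinct vertices joined by three internally disjoint paths of lengths $p$, $m-p$ and $n-p$. It has $m+n-p-1$ vertices and $m+n-p$ edges. For a finite connected graph $G$ with vertex set $V$, edge set $E$ and no vertex of degree $1$, let $r=|E|-|V|+1$, $\mathcal{A}$ the adjacency matrix, $\mathcal{Q}=D-I$ with $D$ the diagonal degree matrix; the reciprocal Ihara zeta function is $\zeta_G(u)^{-1}=(1-u^2)^{r-1}\det(I-\mathcal{A}u+\mathcal{Q}u^2)$. *)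

theory Defs
  imports "Jordan_Normal_Form.Determinant"
begin

text \<open>Finite simple graphs on the vertex set {0..<N}, given by a set E of
  undirected edges, each edge being a two-element set of vertices.\<close>

definition adj_mat :: "nat \<Rightarrow> nat set set \<Rightarrow> complex mat" where
  "adj_mat N E = mat N N (\<lambda>(i,j). if {i,j} \<in> E \<and> i \<noteq> j then 1 else 0)"

definition deg :: "nat \<Rightarrow> nat set set \<Rightarrow> nat \<Rightarrow> nat" where
  "deg N E i = card {j. j < N \<and> j \<noteq> i \<and> {i,j} \<in> E}"

definition Q_mat :: "nat \<Rightarrow> nat set set \<Rightarrow> complex mat" where
  "Q_mat N E = mat N N (\<lambda>(i,j). if i = j then of_nat (deg N E i) - 1 else 0)"

text \<open>Reciprocal Ihara zeta function
  (1-u^2)^(r-1) det(I - A u + Q u^2), with r = |E| - |V| + 1.\<close>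
definition ihara_zeta_inv :: "nat \<Rightarrow> nat set set \<Rightarrow> complex \<Rightarrow> complex" where
  "ihara_zeta_inv N E u =
     (1 - u^2) powi (int (card E) - int N) *
     det (1\<^sub>m N - u \<cdot>\<^sub>m adj_mat N E + (u^2) \<cdot>\<^sub>m Q_mat N E)"

definition path_edges :: "nat list \<Rightarrow> nat set set" where
  "path_edges xs = {{xs ! i, xs ! (i+1)} | i. i + 1 < length xs}"

text \<open>G_{m,n,p}: vertices 0 and 1 joined by three internally disjoint paths of
  lengths p, m-p, n-p; internal vertices are 2..p, p+1..m-1, m..m+n-p-2.
  The vertex set is {0..<m+n-p-1}.\<close>
definition Gmnp_vertices :: "nat \<Rightarrow> nat \<Rightarrow> nat \<Rightarrow> nat" where
  "Gmnp_vertices m n p = m + n - p - 1"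

definition Gmnp_edges :: "nat \<Rightarrow> nat \<Rightarrow> nat \<Rightarrow> nat set set" where
  "Gmnp_edges m n p =
     path_edges (0 # [2..<p+1] @ [1]) \<union>
     path_edges (0 # [p+1..<m] @ [1]) \<union>
     path_edges (0 # [m..<m+n-p-1] @ [1])"

end

theory Submission
  imports Defs
begin

lemma sum_two_pts:
  fixes g :: "nat \<Rightarrow> 'a::comm_ring_1"
  assumes "i < N" "k < N" "i \<noteq> k"
  shows "(\<Sum>l<N. (if l = i then 1 else if l = k then c else 0) * g l) = g i + c * g k"
proof -
  have "(\<Sum>l<N. (if l = i then 1 else if l = k then c else 0) * g l)
     = (\<Sum>l<N. (if l = i then g i else 0) + (if l = k then c * g k else 0))"
    by (rule sum.cong) (use assms in auto)
  also have "\<dots> = g i + c * g k" using assms by (simp add: sum.distrib)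
  finally show ?thesis .
qed

lemma det_schur_last:
  fixes A :: "'a::field mat"
  assumes A: "A \<in> carrier_mat (Suc n) (Suc n)" and nz: "A $$ (n,n) \<noteq> 0"
  shows "det A = A $$ (n,n) * det (mat n n (\<lambda>(i,j). A $$ (i,j) - A $$ (i,n) * A $$ (n,j) / A $$ (n,n)))"
proof -
  define E where "E = mat (Suc n) (Suc n) (\<lambda>(i,j). if i = j then 1 else if j = n then - A $$ (i,n) / A $$ (n,n) else (0::'a))"
  have E: "E \<in> carrier_mat (Suc n) (Suc n)" unfolding E_def by auto
  have ut: "upper_triangular E" unfolding E_def upper_triangular_def by auto
  have dE: "det E = 1"
  proof -
    have "diag_mat E = map (\<lambda>i. 1) [0..<Suc n]" by (auto simp: diag_mat_def E_def)
    thus ?thesis by (subst det_upper_triangular[OF ut E]) (simp add: map_replicate_const)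
  qed
  define B where "B = E * A"
  have B: "B \<in> carrier_mat (Suc n) (Suc n)" unfolding B_def using E A by auto
  have Bij: "B $$ (i,j) = (if i = n then A $$ (n,j) else A $$ (i,j) - A $$ (i,n) / A $$ (n,n) * A $$ (n,j))"
    if "i < Suc n" "j < Suc n" for i j
  proof -
    have "B $$ (i,j) = (\<Sum>l<Suc n. E $$ (i,l) * A $$ (l,j))"
      unfolding B_def using that A E by (simp add: scalar_prod_def atLeast0LessThan)
    also have "\<dots> = (\<Sum>l<Suc n. (if l = i then 1 else if l = n then - A $$ (i,n) / A $$ (n,n) else 0) * A $$ (l,j))"
      by (rule sum.cong) (use that in \<open>auto simp: E_def\<close>)
    also have "\<dots> = (if i = n then A $$ (n,j) else A $$ (i,j) - A $$ (i,n) / A $$ (n,n) * A $$ (n,j))"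
    proof (cases "i = n")
      case True
      then show ?thesis by (simp add: if_distrib cong: if_cong)
    next
      case False
      then show ?thesis using sum_two_pts[of i "Suc n" n "- A $$ (i,n) / A $$ (n,n)" "\<lambda>l. A $$ (l,j)"] that
        by simp
    qed
    finally show ?thesis .
  qed
  have "det B = det E * det A" unfolding B_def by (rule det_mult[OF E A])
  hence dA: "det A = det B" using dE by simp
  have "det B = (\<Sum>i<Suc n. B $$ (i,n) * cofactor B i n)" by (rule laplace_expansion_column[OF B]) simp
  also have "\<dots> = (\<Sum>i<Suc n. if i = n then B $$ (n,n) * cofactor B n n else 0)"
    by (rule sum.cong) (auto simp: Bij nz)
  also have "\<dots> = B $$ (n,n) * cofactor B n n" by simp
  also have "cofactor B n n = det (mat_delete B n n)" unfolding cofactor_def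
    by (simp add: power_mult_distrib[symmetric] flip: mult_2)
  also have "mat_delete B n n = mat n n (\<lambda>(i,j). A $$ (i,j) - A $$ (i,n) * A $$ (n,j) / A $$ (n,n))"
    by (rule eq_matI) (use B in \<open>auto simp: mat_delete_def Bij\<close>)
  finally show ?thesis using dA by (simp add: Bij)
qed

definition Dp :: "complex \<Rightarrow> nat \<Rightarrow> complex" where
  "Dp u r = (\<Sum>i\<le>r. u^(2*i))"

lemma Dp_0[simp]: "Dp u 0 = 1" by (simp add: Dp_def)
lemma Dp_Suc: "Dp u (Suc r) = Dp u r + u^(2*r+2)" by (simp add: Dp_def)
lemma Dp_rec: "u^2 * Dp u r = Dp u (Suc r) - 1"
proof (induction r)
  case 0 show ?case by (simp add: Dp_Suc power2_eq_square)
next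
  case (Suc r)
  have "u^2 * Dp u (Suc r) = u^2 * Dp u r + u^2 * u^(2*r+2)" by (simp add: Dp_Suc algebra_simps)
  also have "\<dots> = Dp u (Suc (Suc r)) - 1" using Suc by (simp add: Dp_Suc power_add[symmetric] algebra_simps)
  finally show ?case .
qed

definition corr :: "complex \<Rightarrow> nat \<Rightarrow> nat \<Rightarrow> nat \<Rightarrow> complex" where
  "corr u q i j = (if i = 0 \<and> j = 0 \<or> i = 1 \<and> j = 1 then -(1 - 1/Dp u q)
     else if i = 0 \<and> j = 1 \<or> i = 1 \<and> j = 0 then - (u^(q+1))/Dp u q else 0)"

definition ext :: "complex \<Rightarrow> (nat \<Rightarrow> nat \<Rightarrow> complex) \<Rightarrow> nat \<Rightarrow> nat \<Rightarrow> nat \<Rightarrow> nat \<Rightarrow> nat \<Rightarrow> complex" where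
  "ext u B s k r i j =
   (if i < s \<and> j < s then B i j - (if i = 1 \<and> j = 1 then 1 - 1 / Dp u r else 0)
    else if i < s then (if i = 0 \<and> j = s then -u else 0) + (if i = 1 \<and> j = s+k-1 then - (u^(r+1))/Dp u r else 0)
    else if j < s then (if j = 0 \<and> i = s then -u else 0) + (if j = 1 \<and> i = s+k-1 then - (u^(r+1))/Dp u r else 0)
    else (if i = j then (if i = s+k-1 then Dp u (r+1)/Dp u r else 1+u^2)
          else if i = j+1 \<or> j = i+1 then -u else 0))"

lemma step_one:
  assumes s: "s \<ge> 2" and D: "\<And>r. Dp u r \<noteq> 0" and i: "i < s" and j: "j < s"
  shows "ext u B s 1 r i j - ext u B s 1 r i s * ext u B s 1 r s j / ext u B s 1 r s s
     = B i j + corr u (r+1) i j"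
proof -
  have d1: "Dp u (Suc r) = Dp u r + u^(2*r+2)" by (rule Dp_Suc)
  have d2: "u^2 * Dp u r = Dp u (Suc r) - 1" by (rule Dp_rec)
  have D0: "Dp u r \<noteq> 0" "Dp u (Suc r) \<noteq> 0" using D by auto
  show ?thesis using s i j D0
    unfolding ext_def corr_def
    apply (auto simp: field_simps)
    subgoal proof -
      have e: "u * (u * (u ^ r * (u ^ r * X))) = u^(2*r+2) * X" for X
        by (simp only: mult_2 power_add power2_eq_square) (simp add: ac_simps)
      show ?thesis unfolding e d1 by (simp add: algebra_simps)
    qed
    subgoal proof -
      have e: "u * (u * (Dp u r * X)) = (u^2 * Dp u r) * X" for X by (simp add: power2_eq_square algebra_simps)
      show ?thesis unfolding e d2 by (simp add: algebra_simps)
    qed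
    done
qed

lemma step_more:
  assumes s: "s \<ge> 2" and D: "\<And>r. Dp u r \<noteq> 0" and k: "k \<ge> 1" and i: "i < s+k" and j: "j < s+k"
  shows "ext u B s (Suc k) r i j - ext u B s (Suc k) r i (s+k) * ext u B s (Suc k) r (s+k) j / ext u B s (Suc k) r (s+k) (s+k)
     = ext u B s k (Suc r) i j"
proof -
  have d1: "Dp u (Suc r) = Dp u r + u^(2*r+2)" by (rule Dp_Suc)
  have d2: "u^2 * Dp u r = Dp u (Suc r) - 1" by (rule Dp_rec)
  have d3: "u^2 * Dp u (Suc r) = Dp u (Suc (Suc r)) - 1" by (rule Dp_rec)
  have D0: "Dp u r \<noteq> 0" "Dp u (Suc r) \<noteq> 0" "Dp u (Suc (Suc r)) \<noteq> 0" using D by auto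
  show ?thesis using s i j k D0
    unfolding ext_def
    apply (auto simp: field_simps)
    subgoal proof -
      have e: "u * (u * Dp u r) = u^2 * Dp u r" "Dp u (Suc r) * u\<^sup>2 = u^2 * Dp u (Suc r)" by (simp_all add: power2_eq_square)
      show ?thesis unfolding e d2 d3 by (simp add: algebra_simps)
    qed
    subgoal proof -
      have e: "u * (u * (u ^ r * (u ^ r * X))) = u^(2*r+2) * X" for X
        by (simp only: mult_2 power_add power2_eq_square) (simp add: ac_simps)
      show ?thesis unfolding e d1 by (simp add: algebra_simps)
    qed
    done
qed

lemma path_elim:
  assumes s: "s \<ge> 2" and D: "\<And>r. Dp u r \<noteq> 0"
  shows "k \<ge> 1 \<Longrightarrow> det (mat (s+k) (s+k) (\<lambda>(i,j). ext u B s k r i j))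
     = Dp u (r+k) / Dp u r * det (mat s s (\<lambda>(i,j). B i j + corr u (r+k) i j))"
proof (induction k arbitrary: r)
  case 0 then show ?case by simp
next
  case (Suc k)
  let ?A = "mat (s + Suc k) (s + Suc k) (\<lambda>(i,j). ext u B s (Suc k) r i j)"
  have A: "?A \<in> carrier_mat (Suc (s+k)) (Suc (s+k))" by simp
  have nn: "?A $$ (s+k, s+k) = Dp u (Suc r) / Dp u r" using s by (simp add: ext_def)
  have nz: "?A $$ (s+k, s+k) \<noteq> 0" unfolding nn using D by simp
  have "det ?A = ?A $$ (s+k, s+k) * det (mat (s+k) (s+k) (\<lambda>(i,j). ?A $$ (i,j) - ?A $$ (i,s+k) * ?A $$ (s+k,j) / ?A $$ (s+k,s+k)))"
    by (rule det_schur_last[OF A nz])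
  also have "mat (s+k) (s+k) (\<lambda>(i,j). ?A $$ (i,j) - ?A $$ (i,s+k) * ?A $$ (s+k,j) / ?A $$ (s+k,s+k))
      = mat (s+k) (s+k) (\<lambda>(i,j). ext u B s (Suc k) r i j - ext u B s (Suc k) r i (s+k) * ext u B s (Suc k) r (s+k) j / ext u B s (Suc k) r (s+k) (s+k))"
    by (rule eq_matI) auto
  finally have eq: "det ?A = Dp u (Suc r) / Dp u r * det (mat (s+k) (s+k) (\<lambda>(i,j). ext u B s (Suc k) r i j - ext u B s (Suc k) r i (s+k) * ext u B s (Suc k) r (s+k) j / ext u B s (Suc k) r (s+k) (s+k)))"
    unfolding nn .
  show ?case
  proof (cases "k = 0")
    case True
    have "mat (s+k) (s+k) (\<lambda>(i,j). ext u B s (Suc k) r i j - ext u B s (Suc k) r i (s+k) * ext u B s (Suc k) r (s+k) j / ext u B s (Suc k) r (s+k) (s+k))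
      = mat s s (\<lambda>(i,j). B i j + corr u (r + Suc k) i j)"
      by (rule eq_matI) (use True step_one[OF s D] in auto)
    then show ?thesis using eq True by simp
  next
    case False
    have "mat (s+k) (s+k) (\<lambda>(i,j). ext u B s (Suc k) r i j - ext u B s (Suc k) r i (s+k) * ext u B s (Suc k) r (s+k) j / ext u B s (Suc k) r (s+k) (s+k))
      = mat (s+k) (s+k) (\<lambda>(i,j). ext u B s k (Suc r) i j)"
      by (rule eq_matI) (use False step_more[OF s D] in auto)
    with eq have "det ?A = Dp u (Suc r) / Dp u r * (Dp u (Suc r + k) / Dp u (Suc r) * det (mat s s (\<lambda>(i,j). B i j + corr u (Suc r + k) i j)))"
      using Suc.IH[of "Suc r"] False by simp
    also have "\<dots> = Dp u (r + Suc k) / Dp u r * det (mat s s (\<lambda>(i,j). B i j + corr u (r + Suc k) i j))"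
      using D[of "Suc r"] by simp
    finally show ?thesis .
  qed
qed

lemma path_list_nth:
  assumes "2 \<le> s" "s \<le> t" "i < t - s + 2"
  shows "(0 # [s..<t] @ [1]) ! i = (if i = 0 then 0 else if i \<le> t - s then s + i - 1 else 1)"
  using assms by (auto simp: nth_Cons' nth_append)

lemma path_edges_img: "path_edges xs = (\<lambda>i. {xs ! i, xs ! (i+1)}) ` {..<length xs - 1}"
  unfolding path_edges_def by auto

lemma card_path_edges:
  assumes "distinct xs" "length xs \<ge> 2"
  shows "card (path_edges xs) = length xs - 1"
proof -
  have "inj_on (\<lambda>i. {xs ! i, xs ! (i+1)}) {..<length xs - 1}"
  proof (rule inj_onI)
    fix i j assume i: "i \<in> {..<length xs - 1}" and j: "j \<in> {..<length xs - 1}"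
      and e: "{xs ! i, xs ! (i+1)} = {xs ! j, xs ! (j+1)}"
    have d: "\<And>a b. a < length xs \<Longrightarrow> b < length xs \<Longrightarrow> xs ! a = xs ! b \<longleftrightarrow> a = b"
      using assms(1) nth_eq_iff_index_eq by blast
    from e have "(xs!i = xs!j \<and> xs!(i+1) = xs!(j+1)) \<or> (xs!i = xs!(j+1) \<and> xs!(i+1) = xs!j)"
      by (auto simp: doubleton_eq_iff)
    then show "i = j" using i j d by auto
  qed
  then show ?thesis unfolding path_edges_img by (simp add: card_image)
qed

definition pe_adj :: "nat \<Rightarrow> nat \<Rightarrow> nat \<Rightarrow> nat \<Rightarrow> bool" where
  "pe_adj s t i j = (if s = t then (i = 0 \<and> j = 1 \<or> i = 1 \<and> j = 0) else
     (i = 0 \<and> j = s \<or> i = s \<and> j = 0 \<or> i = t - 1 \<and> j = 1 \<or> i = 1 \<and> j = t - 1 \<or>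
      s \<le> i \<and> j = i + 1 \<and> j < t \<or> s \<le> j \<and> i = j + 1 \<and> i < t))"

lemma path_edges_char:
  assumes "2 \<le> s" "s \<le> t"
  shows "e \<in> path_edges (0 # [s..<t] @ [1]) \<longleftrightarrow> (\<exists>i j. i \<noteq> j \<and> e = {i,j} \<and> pe_adj s t i j)"
proof
  assume "e \<in> path_edges (0 # [s..<t] @ [1])"
  then obtain l where l: "l < t - s + 1" and e: "e = {(0 # [s..<t] @ [1]) ! l, (0 # [s..<t] @ [1]) ! (l+1)}"
    unfolding path_edges_img using assms by auto
  have n1: "(0 # [s..<t] @ [1]) ! l = (if l = 0 then 0 else if l \<le> t - s then s + l - 1 else 1)"
    using path_list_nth[OF assms(1,2), of l] l by simp
  have n2: "(0 # [s..<t] @ [1]) ! (l+1) = (if l + 1 \<le> t - s then s + l else 1)"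
    using path_list_nth[OF assms(1,2), of "l+1"] l by simp
  show "\<exists>i j. i \<noteq> j \<and> e = {i,j} \<and> pe_adj s t i j"
  proof (cases "s = t")
    case True
    then have "e = {0,1}" using e n1 n2 l by simp
    then show ?thesis using True by (intro exI[of _ 0] exI[of _ 1]) (simp add: pe_adj_def)
  next
    case st: False
    show ?thesis
    proof (cases "l = 0")
      case True
      have "1 \<le> t - s" using st assms by simp
      then have "e = {0,s}" using e n1 n2 l st assms True by simp
      then show ?thesis using st assms by (intro exI[of _ 0] exI[of _ s]) (simp add: pe_adj_def)
    next
      case l0: False
      show ?thesis
      proof (cases "l = t - s")
        case True
        then have "e = {t-1,1}" using e n1 n2 l st assms l0 by auto
        then show ?thesis using st assms by (intro exI[of _ "t-1"] exI[of _ 1]) (auto simp: pe_adj_def)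
      next
        case False
        then have "e = {s+l-1,s+l}" using e n1 n2 l st assms l0 by auto
        then show ?thesis using st assms l l0 False by (intro exI[of _ "s+l-1"] exI[of _ "s+l"]) (auto simp: pe_adj_def)
      qed
    qed
  qed
next
  assume "\<exists>i j. i \<noteq> j \<and> e = {i,j} \<and> pe_adj s t i j"
  then obtain i j where ij: "i \<noteq> j" "e = {i,j}" "pe_adj s t i j" by blast
  let ?xs = "0 # [s..<t] @ [1]"
  have mem: "{?xs ! l, ?xs ! (l+1)} \<in> path_edges ?xs" if "l < t - s + 1" for l
    unfolding path_edges_img using that assms by auto
  have n1: "?xs ! l = (if l = 0 then 0 else if l \<le> t - s then s + l - 1 else 1)" if "l < t - s + 1" for l
    using path_list_nth[OF assms(1,2), of l] that by simp
  have n2: "?xs ! (l+1) = (if l + 1 \<le> t - s then s + l else 1)" if "l < t - s + 1" for l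
    using path_list_nth[OF assms(1,2), of "l+1"] that by simp
  show "e \<in> path_edges ?xs"
  proof (cases "s = t")
    case True
    then have "e = {0,1}" using ij by (auto simp: pe_adj_def)
    then show ?thesis using mem[of 0] n1[of 0] n2[of 0] True by simp
  next
    case st: False
    have st1: "Suc 0 \<le> t - s" using st assms by simp
    have c: "e = {0,s} \<or> e = {t-1,1} \<or> (\<exists>l. s \<le> l \<and> l+1 < t \<and> e = {l, l+1})"
      using ij st by (auto simp: pe_adj_def insert_commute)
    moreover have "{0,s} \<in> path_edges ?xs" using mem[of 0] n1[of 0] n2[of 0] st1 by simp
    moreover have "{t-1,1} \<in> path_edges ?xs" using mem[of "t-s"] n1[of "t-s"] n2[of "t-s"] st assms by auto
    moreover have "{l, l+1} \<in> path_edges ?xs" if "s \<le> l" "l+1 < t" for l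
    proof -
      have h: "Suc (Suc (l - s)) \<le> t - s" "s + (l - s + 1) = Suc l" "l - s < t - s" "s + (l - s + 1) - 1 = l"
        "l - s + 1 \<le> t - s" "l - s + 1 < t - s + 1" using that by auto
      show ?thesis using mem[OF h(6)] n1[OF h(6)] n2[OF h(6)] h by simp
    qed
    ultimately show ?thesis by blast
  qed
qed

definition adj3 :: "nat \<Rightarrow> nat \<Rightarrow> nat \<Rightarrow> nat \<Rightarrow> nat \<Rightarrow> bool" where
  "adj3 a b c i j = (pe_adj 2 (a+2) i j \<or> pe_adj (a+2) (a+b+2) i j \<or> pe_adj (a+b+2) (a+b+c+2) i j)"

lemma nbr0: assumes "b \<ge> 1" "c \<ge> 1"
  shows "{j. j < a+b+c+2 \<and> j \<noteq> 0 \<and> adj3 a b c 0 j} = {if a = 0 then 1 else 2, a+2, a+b+2}"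
  using assms by (auto simp: adj3_def pe_adj_def split: if_splits)

lemma nbr1: assumes "b \<ge> 1" "c \<ge> 1"
  shows "{j. j < a+b+c+2 \<and> j \<noteq> 1 \<and> adj3 a b c 1 j} = {if a = 0 then 0 else a+1, a+b+1, a+b+c+1}"
  using assms by (auto simp: adj3_def pe_adj_def split: if_splits)

lemma pe_adj_sym: "pe_adj s t i j = pe_adj s t j i"
  unfolding pe_adj_def by auto

lemma pe_no_lo: "2 \<le> s \<Longrightarrow> s < t \<Longrightarrow> 2 \<le> i \<Longrightarrow> i < s \<Longrightarrow> \<not> pe_adj s t i j"
  by (auto simp: pe_adj_def)
lemma pe_no_hi: "2 \<le> s \<Longrightarrow> s \<le> t \<Longrightarrow> t \<le> i \<Longrightarrow> \<not> pe_adj s t i j"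
  by (auto simp: pe_adj_def)

lemma nbr_gen: assumes "2 \<le> s" "s < t" "s \<le> i" "i < t" "t \<le> N"
  shows "{j. j < N \<and> j \<noteq> i \<and> pe_adj s t i j} = {if i = s then 0 else i - 1, if i = t - 1 then 1 else i+1}"
proof -
  have ch: "pe_adj s t i j \<longleftrightarrow> (i = s \<and> j = 0 \<or> i = t - 1 \<and> j = 1 \<or> j = i + 1 \<and> j < t \<or> s \<le> j \<and> i = j + 1)" for j
    unfolding pe_adj_def using assms by auto
  show ?thesis
  proof (rule equalityI; rule subsetI)
    fix j assume "j \<in> {j. j < N \<and> j \<noteq> i \<and> pe_adj s t i j}"
    then have j: "j < N" "j \<noteq> i" "i = s \<and> j = 0 \<or> i = t - 1 \<and> j = 1 \<or> j = i + 1 \<and> j < t \<or> s \<le> j \<and> i = j + 1"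
      using ch by auto
    from j(3) show "j \<in> {if i = s then 0 else i - 1, if i = t - 1 then 1 else i+1}"
    proof (elim disjE conjE)
      assume "i = s" "j = 0" then show ?thesis by simp
    next
      assume "i = t - 1" "j = 1" then show ?thesis by simp
    next
      assume "j = i + 1" "j < t" then have "i \<noteq> t - 1" by linarith
      then show ?thesis using \<open>j = i + 1\<close> by simp
    next
      assume "s \<le> j" "i = j + 1" then have "i \<noteq> s" by linarith
      then show ?thesis using \<open>i = j + 1\<close> by simp
    qed
  next
    fix j assume "j \<in> {if i = s then 0 else i - 1, if i = t - 1 then 1 else i+1}"
    then have "j = (if i = s then 0 else i - 1) \<or> j = (if i = t - 1 then 1 else i+1)" by blast
    then show "j \<in> {j. j < N \<and> j \<noteq> i \<and> pe_adj s t i j}"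
    proof
      assume h: "j = (if i = s then 0 else i - 1)"
      show ?thesis
      proof (cases "i = s")
        case True then show ?thesis using h assms ch by simp
      next
        case False then have "j = i - 1" "s \<le> j" "i = j + 1" using h assms by auto
        then show ?thesis using assms ch by simp
      qed
    next
      assume h: "j = (if i = t - 1 then 1 else i+1)"
      show ?thesis
      proof (cases "i = t - 1")
        case True then show ?thesis using h assms ch by simp
      next
        case False then have "j = i + 1" "j < t" using h assms by auto
        then show ?thesis using assms ch by simp
      qed
    qed
  qed
qed

lemma nbri1: assumes "b \<ge> 1" "c \<ge> 1" "2 \<le> i" "i \<le> a+1"
  shows "{j. j < a+b+c+2 \<and> j \<noteq> i \<and> adj3 a b c i j} =
     {if i = 2 then 0 else i - 1, if i = a+1 then 1 else i+1}"
proof -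
  have "adj3 a b c i j \<longleftrightarrow> pe_adj 2 (a+2) i j" for j
    unfolding adj3_def using pe_no_lo[of "a+2" "a+b+2" i j] pe_no_lo[of "a+b+2" "a+b+c+2" i j] assms by auto
  then have "{j. j < a+b+c+2 \<and> j \<noteq> i \<and> adj3 a b c i j} = {j. j < a+b+c+2 \<and> j \<noteq> i \<and> pe_adj 2 (a+2) i j}" by simp
  also have "\<dots> = {if i = 2 then 0 else i - 1, if i = a+2-1 then 1 else i+1}"
    by (rule nbr_gen) (use assms in auto)
  finally show ?thesis by simp
qed

lemma nbri2: assumes "b \<ge> 1" "c \<ge> 1" "a+2 \<le> i" "i \<le> a+b+1"
  shows "{j. j < a+b+c+2 \<and> j \<noteq> i \<and> adj3 a b c i j} =
     {if i = a+2 then 0 else i - 1, if i = a+b+1 then 1 else i+1}"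
proof -
  have "adj3 a b c i j \<longleftrightarrow> pe_adj (a+2) (a+b+2) i j" for j
    unfolding adj3_def using pe_no_hi[of 2 "a+2" i j] pe_no_lo[of "a+b+2" "a+b+c+2" i j] assms by auto
  then have "{j. j < a+b+c+2 \<and> j \<noteq> i \<and> adj3 a b c i j} = {j. j < a+b+c+2 \<and> j \<noteq> i \<and> pe_adj (a+2) (a+b+2) i j}" by simp
  also have "\<dots> = {if i = a+2 then 0 else i - 1, if i = a+b+2-1 then 1 else i+1}"
    by (rule nbr_gen) (use assms in auto)
  finally show ?thesis by simp
qed

lemma nbri3: assumes "b \<ge> 1" "c \<ge> 1" "a+b+2 \<le> i" "i \<le> a+b+c+1"
  shows "{j. j < a+b+c+2 \<and> j \<noteq> i \<and> adj3 a b c i j} =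
     {if i = a+b+2 then 0 else i - 1, if i = a+b+c+1 then 1 else i+1}"
proof -
  have "adj3 a b c i j \<longleftrightarrow> pe_adj (a+b+2) (a+b+c+2) i j" for j
    unfolding adj3_def using pe_no_hi[of 2 "a+2" i j] pe_no_hi[of "a+2" "a+b+2" i j] assms by auto
  then have "{j. j < a+b+c+2 \<and> j \<noteq> i \<and> adj3 a b c i j} = {j. j < a+b+c+2 \<and> j \<noteq> i \<and> pe_adj (a+b+2) (a+b+c+2) i j}" by simp
  also have "\<dots> = {if i = a+b+2 then 0 else i - 1, if i = a+b+c+2-1 then 1 else i+1}"
    by (rule nbr_gen) (use assms in auto)
  finally show ?thesis by simp
qed

definition Mf :: "complex \<Rightarrow> nat \<Rightarrow> nat \<Rightarrow> nat \<Rightarrow> nat \<Rightarrow> nat \<Rightarrow> complex" where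
  "Mf u a b c i j = (if i = j then (if i \<le> 1 then 1 + 2*u^2 else 1 + u^2) else if adj3 a b c i j then -u else 0)"

definition B1 :: "complex \<Rightarrow> nat \<Rightarrow> nat \<Rightarrow> complex" where
  "B1 u i j = (if i = j then 1 + 2*u^2 else 0)"
definition B2 :: "complex \<Rightarrow> nat \<Rightarrow> nat \<Rightarrow> nat \<Rightarrow> complex" where
  "B2 u a = (if a = 0 then (\<lambda>i j. B1 u i j + corr u 0 i j) else ext u (B1 u) 2 a 0)"
definition B3 :: "complex \<Rightarrow> nat \<Rightarrow> nat \<Rightarrow> nat \<Rightarrow> nat \<Rightarrow> complex" where
  "B3 u a b = ext u (B2 u a) (a+2) b 0"
definition T3 :: "complex \<Rightarrow> nat \<Rightarrow> nat \<Rightarrow> nat \<Rightarrow> nat \<Rightarrow> nat \<Rightarrow> complex" where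
  "T3 u a b c = ext u (B3 u a b) (a+b+2) c 0"

lemma Dp_1: "Dp u (Suc 0) = 1 + u^2" by (simp add: Dp_def)

lemma ext_outer: assumes "s \<ge> 2" "k \<ge> 1" "i < s+k" "j < s+k" "\<not> (i < s \<and> j < s)"
  shows "ext u B s k 0 i j = (if i = j then 1 + u^2 else if pe_adj s (s+k) i j then -u else 0)"
proof -
  have pe: "pe_adj s (s+k) i j \<longleftrightarrow> (i = 0 \<and> j = s \<or> i = s \<and> j = 0 \<or> i = s+k-1 \<and> j = 1 \<or> i = 1 \<and> j = s+k-1 \<or>
      s \<le> i \<and> j = i + 1 \<and> j < s+k \<or> s \<le> j \<and> i = j + 1 \<and> i < s+k)"
    unfolding pe_adj_def using assms by simp
  show ?thesis
  proof (cases "i < s")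
    case True
    then have j: "j \<ge> s" using assms by auto
    have "ext u B s k 0 i j = (if i = 0 \<and> j = s then -u else 0) + (if i = 1 \<and> j = s+k-1 then -u else 0)"
      unfolding ext_def using True j by simp
    moreover have "(if i = j then 1 + u^2 else if pe_adj s (s+k) i j then -u else 0) = (if i = 0 \<and> j = s \<or> i = 1 \<and> j = s+k-1 then -u else 0)"
      unfolding pe using True j assms by auto
    ultimately show ?thesis using assms by auto
  next
    case False
    then have i: "i \<ge> s" by auto
    show ?thesis
    proof (cases "j < s")
      case True
      have "ext u B s k 0 i j = (if j = 0 \<and> i = s then -u else 0) + (if j = 1 \<and> i = s+k-1 then -u else 0)"
        unfolding ext_def using True i by simp
      moreover have "(if i = j then 1 + u^2 else if pe_adj s (s+k) i j then -u else 0) = (if j = 0 \<and> i = s \<or> j = 1 \<and> i = s+k-1 then -u else 0)"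
        unfolding pe using True i assms by auto
      ultimately show ?thesis using assms by auto
    next
      case False
      then have j: "j \<ge> s" by auto
      have "ext u B s k 0 i j = (if i = j then 1 + u^2 else if i = j+1 \<or> j = i+1 then -u else 0)"
        unfolding ext_def using i j by (simp add: Dp_1)
      moreover have "(if i = j then 1 + u^2 else if pe_adj s (s+k) i j then -u else 0) = (if i = j then 1 + u^2 else if i = j+1 \<or> j = i+1 then -u else 0)"
        unfolding pe using i j assms by auto
      ultimately show ?thesis by auto
    qed
  qed
qed

lemma L3: assumes "b \<ge> 1" "c \<ge> 1" "i < a+b+c+2" "j < a+b+c+2" "\<not> (i < a+b+2 \<and> j < a+b+2)"
  shows "Mf u a b c i j = T3 u a b c i j"
proof -
  have adj: "adj3 a b c i j \<longleftrightarrow> pe_adj (a+b+2) (a+b+2+c) i j"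
    unfolding adj3_def using pe_no_hi[of 2 "a+2" i j] pe_no_hi[of "a+2" "a+b+2" i j]
      pe_no_hi[of 2 "a+2" j i] pe_no_hi[of "a+2" "a+b+2" j i] pe_adj_sym assms by (auto simp: add_ac)
  have "T3 u a b c i j = (if i = j then 1 + u^2 else if pe_adj (a+b+2) (a+b+2+c) i j then -u else 0)"
    unfolding T3_def by (rule ext_outer) (use assms in auto)
  moreover have "i = j \<Longrightarrow> \<not> i \<le> 1" using assms by auto
  ultimately show ?thesis unfolding Mf_def adj by auto
qed

lemma L2: assumes "b \<ge> 1" "c \<ge> 1" "i < a+b+2" "j < a+b+2" "\<not> (i < a+2 \<and> j < a+2)"
  shows "Mf u a b c i j = B3 u a b i j"
proof -
  have adj: "adj3 a b c i j \<longleftrightarrow> pe_adj (a+2) (a+2+b) i j"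
    unfolding adj3_def using pe_no_hi[of 2 "a+2" i j] pe_no_lo[of "a+b+2" "a+b+c+2" i j]
      pe_no_hi[of 2 "a+2" j i] pe_no_lo[of "a+b+2" "a+b+c+2" j i] pe_adj_sym assms by (auto simp: add_ac)
  have "B3 u a b i j = (if i = j then 1 + u^2 else if pe_adj (a+2) (a+2+b) i j then -u else 0)"
    unfolding B3_def by (rule ext_outer) (use assms in auto)
  moreover have "i = j \<Longrightarrow> \<not> i \<le> 1" using assms by auto
  ultimately show ?thesis unfolding Mf_def adj by auto
qed

lemma L1: assumes "b \<ge> 1" "c \<ge> 1" "i < a+2" "j < a+2"
  shows "Mf u a b c i j = B2 u a i j"
proof -
  have adj: "adj3 a b c i j \<longleftrightarrow> pe_adj 2 (2+a) i j"
    unfolding adj3_def using pe_no_lo[of "a+2" "a+b+2" i j] pe_no_lo[of "a+b+2" "a+b+c+2" i j]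
      pe_no_lo[of "a+2" "a+b+2" j i] pe_no_lo[of "a+b+2" "a+b+c+2" j i] pe_adj_sym assms
    by (auto simp: pe_adj_def add_ac)
  show ?thesis
  proof (cases "a = 0")
    case True
    then show ?thesis using assms unfolding Mf_def B2_def B1_def corr_def adj pe_adj_def by auto
  next
    case False
    show ?thesis
    proof (cases "i < 2 \<and> j < 2")
      case True
      then show ?thesis using False assms unfolding Mf_def B2_def B1_def ext_def adj pe_adj_def by auto
    next
      case F2: False
      have "B2 u a i j = (if i = j then 1 + u^2 else if pe_adj 2 (2+a) i j then -u else 0)"
      proof -
        have "ext u (B1 u) 2 a 0 i j = (if i = j then 1 + u^2 else if pe_adj 2 (2+a) i j then -u else 0)"
          by (rule ext_outer) (use assms F2 False in auto)
        then show ?thesis unfolding B2_def using False by simp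
      qed
      moreover have "i = j \<Longrightarrow> \<not> i \<le> 1" using F2 by auto
      ultimately show ?thesis unfolding Mf_def adj by auto
    qed
  qed
qed

lemma Mf_T3: assumes "b \<ge> 1" "c \<ge> 1" "i < a+b+c+2" "j < a+b+c+2"
  shows "Mf u a b c i j = T3 u a b c i j"
proof (cases "i < a+b+2 \<and> j < a+b+2")
  case False then show ?thesis using L3 assms by blast
next
  case True
  then have t: "T3 u a b c i j = B3 u a b i j" unfolding T3_def ext_def by auto
  show ?thesis
  proof (cases "i < a+2 \<and> j < a+2")
    case False then show ?thesis using L2 assms True t by auto
  next
    case True2: True
    then have "B3 u a b i j = B2 u a i j" unfolding B3_def ext_def by auto
    then show ?thesis using L1 assms True2 t by auto
  qed
qed

lemma ext_add_corr: assumes "s \<ge> 2"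
  shows "ext u (\<lambda>i j. B i j + corr u q i j) s k 0 i j = ext u B s k 0 i j + corr u q i j"
  using assms unfolding ext_def corr_def by auto

lemma mat_cong': "(\<And>i j. i < n \<Longrightarrow> j < n \<Longrightarrow> f i j = g i j) \<Longrightarrow> mat n n (\<lambda>(i,j). f i j) = mat n n (\<lambda>(i,j). g i j)"
  by (rule eq_matI) auto

lemma det2: "det (mat 2 2 (\<lambda>(i,j). f i j)) = f 0 0 * f 1 1 - f 0 1 * (f 1 0 :: 'a :: comm_ring_1)"
proof -
  let ?A = "mat 2 2 (\<lambda>(i,j). f i j)"
  have A: "?A \<in> carrier_mat 2 2" by simp
  have "det ?A = (\<Sum>i<2. ?A $$ (i,0) * cofactor ?A i 0)" by (rule laplace_expansion_column[OF A]) simp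
  also have "\<dots> = ?A $$ (0,0) * cofactor ?A 0 0 + ?A $$ (1,0) * cofactor ?A 1 0"
    by (simp add: numeral_2_eq_2)
  also have "cofactor ?A 0 0 = f 1 1" unfolding cofactor_def
    by (subst det_single[of _]) (auto simp: mat_delete_def)
  also have "cofactor ?A 1 0 = - f 0 1" unfolding cofactor_def
    by (subst det_single[of _]) (auto simp: mat_delete_def)
  finally show ?thesis by (simp add: mult_ac)
qed

lemma det_T3: assumes b: "b \<ge> 1" and c: "c \<ge> 1" and D: "\<And>r. Dp u r \<noteq> 0"
  shows "det (mat (a+b+c+2) (a+b+c+2) (\<lambda>(i,j). T3 u a b c i j)) =
    Dp u a * Dp u b * Dp u c * det (mat 2 2 (\<lambda>(i,j). B1 u i j + corr u a i j + corr u b i j + corr u c i j))"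
proof -
  have s3: "a+b+c+2 = (a+b+2) + c" by simp
  have h1: "det (mat (a+b+c+2) (a+b+c+2) (\<lambda>(i,j). T3 u a b c i j)) =
      Dp u (0+c) / Dp u 0 * det (mat (a+b+2) (a+b+2) (\<lambda>(i,j). B3 u a b i j + corr u (0+c) i j))"
    unfolding s3 T3_def by (rule path_elim[OF _ D c]) simp
  have h2: "mat (a+b+2) (a+b+2) (\<lambda>(i,j). B3 u a b i j + corr u (0+c) i j)
     = mat ((a+2)+b) ((a+2)+b) (\<lambda>(i,j). ext u (\<lambda>i j. B2 u a i j + corr u c i j) (a+2) b 0 i j)"
  proof -
    have e: "a+b+2 = (a+2)+b" by simp
    show ?thesis unfolding e by (rule mat_cong') (simp add: B3_def ext_add_corr)
  qed
  have h3: "det (mat ((a+2)+b) ((a+2)+b) (\<lambda>(i,j). ext u (\<lambda>i j. B2 u a i j + corr u c i j) (a+2) b 0 i j))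
     = Dp u (0+b) / Dp u 0 * det (mat (a+2) (a+2) (\<lambda>(i,j). (B2 u a i j + corr u c i j) + corr u (0+b) i j))"
    by (rule path_elim[OF _ D b]) simp
  have h4: "det (mat (a+2) (a+2) (\<lambda>(i,j). (B2 u a i j + corr u c i j) + corr u (0+b) i j))
      = Dp u a * det (mat 2 2 (\<lambda>(i,j). B1 u i j + corr u a i j + corr u b i j + corr u c i j))"
  proof (cases "a = 0")
    case True
    have e: "a + 2 = 2" using True by simp
    have "mat (a+2) (a+2) (\<lambda>(i,j). (B2 u a i j + corr u c i j) + corr u (0+b) i j)
        = mat 2 2 (\<lambda>(i,j). B1 u i j + corr u a i j + corr u b i j + corr u c i j)"
      unfolding e by (rule mat_cong') (simp add: B2_def True algebra_simps)
    then have "det (mat (a+2) (a+2) (\<lambda>(i,j). (B2 u a i j + corr u c i j) + corr u (0+b) i j))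
        = det (mat 2 2 (\<lambda>(i,j). B1 u i j + corr u a i j + corr u b i j + corr u c i j))" by (rule arg_cong)
    then show ?thesis using True by simp
  next
    case False
    have g1: "mat (a+2) (a+2) (\<lambda>(i,j). (B2 u a i j + corr u c i j) + corr u (0+b) i j)
      = mat (2+a) (2+a) (\<lambda>(i,j). ext u (\<lambda>i j. (B1 u i j + corr u c i j) + corr u b i j) 2 a 0 i j)"
    proof -
      have e: "a+2 = 2+a" by simp
      show ?thesis unfolding e by (rule mat_cong') (simp add: B2_def False ext_add_corr)
    qed
    have g2: "det (mat (2+a) (2+a) (\<lambda>(i,j). ext u (\<lambda>i j. (B1 u i j + corr u c i j) + corr u b i j) 2 a 0 i j))
       = Dp u (0+a) / Dp u 0 * det (mat 2 2 (\<lambda>(i,j). ((B1 u i j + corr u c i j) + corr u b i j) + corr u (0+a) i j))"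
      by (rule path_elim[OF _ D]) (use False in auto)
    have g3: "mat 2 2 (\<lambda>(i,j). ((B1 u i j + corr u c i j) + corr u b i j) + corr u (0+a) i j)
       = mat 2 2 (\<lambda>(i,j). B1 u i j + corr u a i j + corr u b i j + corr u c i j)"
      by (rule mat_cong') (simp add: algebra_simps)
    show ?thesis unfolding g1 g2 g3 by simp
  qed
  show ?thesis unfolding h1 h2 h3 h4 by (simp add: mult_ac)
qed

lemma mem_path_edges:
  assumes "2 \<le> s" "s \<le> t" "i \<noteq> j"
  shows "{i,j} \<in> path_edges (0 # [s..<t] @ [1]) \<longleftrightarrow> pe_adj s t i j"
  unfolding path_edges_char[OF assms(1,2)] using assms(3)
  by (auto simp: doubleton_eq_iff pe_adj_sym)

lemma E3_def: "Gmnp_edges (a+b+2) (a+c+2) (a+1) =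
   path_edges (0 # [2..<a+2] @ [1]) \<union> path_edges (0 # [a+2..<a+b+2] @ [1]) \<union> path_edges (0 # [a+b+2..<a+b+c+2] @ [1])"
  unfolding Gmnp_edges_def by (simp add: add_ac)

lemma V3: "Gmnp_vertices (a+b+2) (a+c+2) (a+1) = a+b+c+2"
  unfolding Gmnp_vertices_def by simp

context
  fixes a b c :: nat
  assumes b: "b \<ge> 1" and c: "c \<ge> 1"
begin

lemma E3_mem: assumes "i \<noteq> j" shows "{i,j} \<in> Gmnp_edges (a+b+2) (a+c+2) (a+1) \<longleftrightarrow> adj3 a b c i j"
proof -
  have x: "{i,j} \<in> path_edges (0 # [2..<a+2] @ [1]) \<longleftrightarrow> pe_adj 2 (a+2) i j"
    by (rule mem_path_edges) (use assms in auto)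
  have y: "{i,j} \<in> path_edges (0 # [a+2..<a+b+2] @ [1]) \<longleftrightarrow> pe_adj (a+2) (a+b+2) i j"
    by (rule mem_path_edges) (use assms in auto)
  have z: "{i,j} \<in> path_edges (0 # [a+b+2..<a+b+c+2] @ [1]) \<longleftrightarrow> pe_adj (a+b+2) (a+b+c+2) i j"
    by (rule mem_path_edges) (use assms in auto)
  show ?thesis unfolding E3_def adj3_def using x y z by blast
qed

lemma card_E3: "card (Gmnp_edges (a+b+2) (a+c+2) (a+1)) = a+b+c+3"
proof -
  let ?P1 = "path_edges (0 # [2..<a+2] @ [1])"
  let ?P2 = "path_edges (0 # [a+2..<a+b+2] @ [1])"
  let ?P3 = "path_edges (0 # [a+b+2..<a+b+c+2] @ [1])"
  have c1: "card ?P1 = a+1" by (subst card_path_edges) auto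
  have c2: "card ?P2 = b+1" by (subst card_path_edges) auto
  have c3: "card ?P3 = c+1" by (subst card_path_edges) auto
  have f: "finite ?P1" "finite ?P2" "finite ?P3" unfolding path_edges_img by auto
  have el: "\<And>e s t. 2 \<le> s \<Longrightarrow> s \<le> t \<Longrightarrow> e \<in> path_edges (0 # [s..<t] @ [1]) \<Longrightarrow> \<exists>i j. i \<noteq> j \<and> e = {i,j} \<and> pe_adj s t i j"
    using path_edges_char by blast
  have d12: "?P1 \<inter> ?P2 = {}"
  proof (rule ccontr)
    assume "?P1 \<inter> ?P2 \<noteq> {}"
    then obtain e where e1: "e \<in> ?P1" and e2: "e \<in> ?P2" by blast
    obtain i j where ij: "i \<noteq> j" "e = {i,j}" "pe_adj 2 (a+2) i j" using el[OF _ _ e1] by auto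
    have "pe_adj (a+2) (a+b+2) i j" using e2 ij mem_path_edges[of "a+2" "a+b+2" i j] by auto
    then show False using ij b by (auto simp: pe_adj_def split: if_splits)
  qed
  have d13: "?P1 \<inter> ?P3 = {}"
  proof (rule ccontr)
    assume "?P1 \<inter> ?P3 \<noteq> {}"
    then obtain e where e1: "e \<in> ?P1" and e2: "e \<in> ?P3" by blast
    obtain i j where ij: "i \<noteq> j" "e = {i,j}" "pe_adj 2 (a+2) i j" using el[OF _ _ e1] by auto
    have "pe_adj (a+b+2) (a+b+c+2) i j" using e2 ij mem_path_edges[of "a+b+2" "a+b+c+2" i j] by auto
    then show False using ij b c by (auto simp: pe_adj_def split: if_splits)
  qed
  have d23: "?P2 \<inter> ?P3 = {}"
  proof (rule ccontr)
    assume "?P2 \<inter> ?P3 \<noteq> {}"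
    then obtain e where e1: "e \<in> ?P2" and e2: "e \<in> ?P3" by blast
    obtain i j where ij: "i \<noteq> j" "e = {i,j}" "pe_adj (a+2) (a+b+2) i j" using el[OF _ _ e1] by auto
    have "pe_adj (a+b+2) (a+b+c+2) i j" using e2 ij mem_path_edges[of "a+b+2" "a+b+c+2" i j] by auto
    then show False using ij b c by (auto simp: pe_adj_def split: if_splits)
  qed
  have "card (Gmnp_edges (a+b+2) (a+c+2) (a+1)) = card ?P1 + card ?P2 + card ?P3"
    unfolding E3_def
    by (subst card_Un_disjoint, use f d12 d13 d23 in auto)+
  then show ?thesis unfolding c1 c2 c3 by simp
qed

lemma card3: "x \<noteq> y \<Longrightarrow> x \<noteq> z \<Longrightarrow> y \<noteq> z \<Longrightarrow> card {x,y,z::nat} = 3" by simp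
lemma card2: "x \<noteq> y \<Longrightarrow> card {x,y::nat} = 2" by simp

lemma deg3: assumes "i < a+b+c+2"
  shows "deg (a+b+c+2) (Gmnp_edges (a+b+2) (a+c+2) (a+1)) i = (if i \<le> 1 then 3 else 2)"
proof -
  have "{j. j < a+b+c+2 \<and> j \<noteq> i \<and> {i,j} \<in> Gmnp_edges (a+b+2) (a+c+2) (a+1)} = {j. j < a+b+c+2 \<and> j \<noteq> i \<and> adj3 a b c i j}"
  proof (rule Collect_cong)
    fix j show "(j < a+b+c+2 \<and> j \<noteq> i \<and> {i,j} \<in> Gmnp_edges (a+b+2) (a+c+2) (a+1)) = (j < a+b+c+2 \<and> j \<noteq> i \<and> adj3 a b c i j)"
      using E3_mem[of i j] by blast
  qed
  then have d: "deg (a+b+c+2) (Gmnp_edges (a+b+2) (a+c+2) (a+1)) i = card {j. j < a+b+c+2 \<and> j \<noteq> i \<and> adj3 a b c i j}"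
    unfolding deg_def by simp
  consider "i = 0" | "i = 1" | "2 \<le> i \<and> i \<le> a+1" | "a+2 \<le> i \<and> i \<le> a+b+1" | "a+b+2 \<le> i \<and> i \<le> a+b+c+1"
    using assms by linarith
  then show ?thesis
  proof cases
    case 1
    have "card {j. j < a+b+c+2 \<and> j \<noteq> i \<and> adj3 a b c i j} = 3" unfolding 1 nbr0[OF b c, of a]
      by (rule card3) (use b in auto)
    then show ?thesis unfolding d using 1 by simp
  next
    case 2
    have "card {j. j < a+b+c+2 \<and> j \<noteq> i \<and> adj3 a b c i j} = 3" unfolding 2 nbr1[OF b c, of a]
      by (rule card3) (use b c in auto)
    then show ?thesis unfolding d using 2 by simp
  next
    case 3 then show ?thesis unfolding d nbri1[OF b c 3[THEN conjunct1] 3[THEN conjunct2]] by (subst card2) (use 3 in auto)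
  next
    case 4 then show ?thesis unfolding d nbri2[OF b c 4[THEN conjunct1] 4[THEN conjunct2]] by (subst card2) (use 4 in auto)
  next
    case 5 then show ?thesis unfolding d nbri3[OF b c 5[THEN conjunct1] 5[THEN conjunct2]] by (subst card2) (use 5 in auto)
  qed
qed

lemma matrix_eq:
  "1\<^sub>m (a+b+c+2) - u \<cdot>\<^sub>m adj_mat (a+b+c+2) (Gmnp_edges (a+b+2) (a+c+2) (a+1))
     + (u^2) \<cdot>\<^sub>m Q_mat (a+b+c+2) (Gmnp_edges (a+b+2) (a+c+2) (a+1))
   = mat (a+b+c+2) (a+b+c+2) (\<lambda>(i,j). Mf u a b c i j)"
proof (rule eq_matI)
  fix i j assume i: "i < dim_row (mat (a+b+c+2) (a+b+c+2) (\<lambda>(i,j). Mf u a b c i j))"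
    and j: "j < dim_col (mat (a+b+c+2) (a+b+c+2) (\<lambda>(i,j). Mf u a b c i j))"
  then have i': "i < a+b+c+2" and j': "j < a+b+c+2" by auto
  show "(1\<^sub>m (a+b+c+2) - u \<cdot>\<^sub>m adj_mat (a+b+c+2) (Gmnp_edges (a+b+2) (a+c+2) (a+1))
     + (u^2) \<cdot>\<^sub>m Q_mat (a+b+c+2) (Gmnp_edges (a+b+2) (a+c+2) (a+1))) $$ (i,j) =
     mat (a+b+c+2) (a+b+c+2) (\<lambda>(i,j). Mf u a b c i j) $$ (i,j)"
    using i' j' E3_mem[of i j] deg3[OF i']
    by (auto simp: adj_mat_def Q_mat_def Mf_def algebra_simps)
qed (auto simp: adj_mat_def Q_mat_def)

end

lemma Dp_closed: "(1 - u^2) * Dp u k = 1 - (u^(k+1))^2"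
proof (induction k)
  case 0 then show ?case by (simp add: power2_eq_square algebra_simps)
next
  case (Suc k)
  have "(1 - u^2) * Dp u (Suc k) = (1 - u^2) * Dp u k + (1-u^2) * u^(2*k+2)" by (simp add: Dp_Suc algebra_simps)
  also have "\<dots> = 1 - (u^(Suc k + 1))^2" unfolding Suc
    by (simp only: power_mult[symmetric] power_add mult_2 power2_eq_square) (simp add: algebra_simps)
  finally show ?case .
qed

lemma Dp_nz: assumes "norm u < 1" shows "Dp u k \<noteq> 0"
proof
  assume "Dp u k = 0"
  then have "1 - (u^(k+1))^2 = 0" using Dp_closed[of u k] by simp
  then have "(u^(k+1))^2 = 1" by simp
  then have "norm ((u^(k+1))^2) = 1" by simp
  moreover have "norm ((u^(k+1))^2) = norm u ^ ((k+1)*2)" by (simp only: norm_power power_mult)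
  moreover have "norm u ^ ((k+1)*2) < 1" using assms by (subst power_less_one_iff) auto
  ultimately show False by simp
qed

lemma poly_id:
  fixes X Y Z :: "'a::comm_ring_1"
  shows "((1 - Y^2)*(1 - Z^2) + (1 - X^2)*(1 - Z^2) + (1 - X^2)*(1 - Y^2) - 2*(1 - X^2)*(1 - Y^2)*(1 - Z^2))^2
       - (X*(1 - Y^2)*(1 - Z^2) + Y*(1 - X^2)*(1 - Z^2) + Z*(1 - X^2)*(1 - Y^2))^2 =
     (1 - X^2)*(1 - Y^2)*(1 - Z^2)*(-4*X^2*Y^2*Z^2 + Y^2*Z^2 + 2*X*Y*Z^2 + 2*X*Y^2*Z + X^2*Z^2 + X^2*Y^2 + 2*X^2*Y*Z - 2*Y*Z - 2*X*Z - 2*X*Y + 1)"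
  by (simp add: algebra_simps power2_eq_square)

lemma alg_id:
  fixes q X Y Z Da Db Dc :: complex
  assumes K: "1 - q \<noteq> 0" and a: "(1 - q) * Da = 1 - X^2" and b: "(1 - q) * Db = 1 - Y^2" and c: "(1 - q) * Dc = 1 - Z^2"
    and nz: "Da \<noteq> 0" "Db \<noteq> 0" "Dc \<noteq> 0"
  shows "(1 - q) * (Da * Db * Dc * ((1 + 2*q - (1 - 1/Da) - (1 - 1/Db) - (1 - 1/Dc)) *
       (1 + 2*q - (1 - 1/Da) - (1 - 1/Db) - (1 - 1/Dc)) - (- X/Da - Y/Db - Z/Dc) * (- X/Da - Y/Db - Z/Dc)))
     = -4*X^2*Y^2*Z^2 + Y^2*Z^2 + 2*X*Y*Z^2 + 2*X*Y^2*Z + X^2*Z^2 + X^2*Y^2 + 2*X^2*Y*Z - 2*Y*Z - 2*X*Z - 2*X*Y + 1"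
    (is "_ = ?R")
proof -
  define A where "A = 1 - X^2"
  define B where "B = 1 - Y^2"
  define C where "C = 1 - Z^2"
  define K where "K = 1 - q"
  have q: "q = 1 - K" unfolding K_def by simp
  have nA: "A \<noteq> 0" "B \<noteq> 0" "C \<noteq> 0" using a b c nz K unfolding A_def B_def C_def by auto
  have iA: "1 / Da = K / A" "1/Db = K/B" "1/Dc = K/C" using a b c nz K nA unfolding A_def B_def C_def K_def
    by (auto simp: field_simps)
  have f00: "1 + 2*q - (1 - 1/Da) - (1 - 1/Db) - (1 - 1/Dc) = K * (B*C + A*C + A*B - 2*A*B*C) / (A*B*C)"
    unfolding iA q using nA by (simp add: field_simps)
  have f01: "- X/Da - Y/Db - Z/Dc = - K * (X*B*C + Y*A*C + Z*A*B) / (A*B*C)"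
  proof -
    have e1: "(-X)/Da = (-X)*K/A" proof - have "(-X)/Da = (-X) * (1/Da)" by simp also have "\<dots> = (-X)*K/A" by (subst iA(1)) simp finally show ?thesis . qed
    have e2: "Y/Db = Y*K/B" proof - have "Y/Db = Y * (1/Db)" by simp also have "\<dots> = Y*K/B" by (subst iA(2)) simp finally show ?thesis . qed
    have e3: "Z/Dc = Z*K/C" proof - have "Z/Dc = Z * (1/Dc)" by simp also have "\<dots> = Z*K/C" by (subst iA(3)) simp finally show ?thesis . qed
    show ?thesis unfolding e1 e2 e3 using nA by (simp add: field_simps)
  qed
  have ABC: "A*B*C = ((1-q)*Da)*((1-q)*Db)*((1-q)*Dc)" unfolding A_def B_def C_def a b c by simp
  also have "\<dots> = K^3 * (Da*Db*Dc)" unfolding K_def by (simp add: power3_eq_cube algebra_simps)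
  finally have DD: "Da * Db * Dc = A*B*C/K^3" using K unfolding K_def by (simp add: field_simps)
  have P: "(B*C + A*C + A*B - 2*A*B*C)^2 - (X*B*C + Y*A*C + Z*A*B)^2 = A*B*C * ?R"
    unfolding A_def B_def C_def by (rule poly_id)
  have "(1 - q) * (Da * Db * Dc * ((1 + 2*q - (1 - 1/Da) - (1 - 1/Db) - (1 - 1/Dc)) *
       (1 + 2*q - (1 - 1/Da) - (1 - 1/Db) - (1 - 1/Dc)) - (- X/Da - Y/Db - Z/Dc) * (- X/Da - Y/Db - Z/Dc)))
    = ((B*C + A*C + A*B - 2*A*B*C)^2 - (X*B*C + Y*A*C + Z*A*B)^2) / (A*B*C)"
    unfolding f00 f01 DD K_def[symmetric] using nA K unfolding K_def[symmetric]
    by (simp add: field_simps power2_eq_square power3_eq_cube)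
  also have "\<dots> = ?R" unfolding P using nA by simp
  finally show ?thesis .
qed

lemma det2_val:
  "det (mat 2 2 (\<lambda>(i,j). B1 u i j + corr u a i j + corr u b i j + corr u c i j)) =
   (1 + 2*u^2 - (1 - 1/Dp u a) - (1 - 1/Dp u b) - (1 - 1/Dp u c)) * (1 + 2*u^2 - (1 - 1/Dp u a) - (1 - 1/Dp u b) - (1 - 1/Dp u c))
   - (- (u^(a+1))/Dp u a - (u^(b+1))/Dp u b - (u^(c+1))/Dp u c) * (- (u^(a+1))/Dp u a - (u^(b+1))/Dp u b - (u^(c+1))/Dp u c)"
proof -
  have f00: "B1 u 0 0 + corr u a 0 0 + corr u b 0 0 + corr u c 0 0 = 1 + 2*u^2 - (1 - 1/Dp u a) - (1 - 1/Dp u b) - (1 - 1/Dp u c)"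
    by (simp add: B1_def corr_def)
  have f11: "B1 u 1 1 + corr u a 1 1 + corr u b 1 1 + corr u c 1 1 = 1 + 2*u^2 - (1 - 1/Dp u a) - (1 - 1/Dp u b) - (1 - 1/Dp u c)"
    by (simp add: B1_def corr_def)
  have f01: "B1 u 0 1 + corr u a 0 1 + corr u b 0 1 + corr u c 0 1 = - (u^(a+1))/Dp u a - (u^(b+1))/Dp u b - (u^(c+1))/Dp u c"
    by (simp add: B1_def corr_def del: power_Suc)
  have f10: "B1 u 1 0 + corr u a 1 0 + corr u b 1 0 + corr u c 1 0 = - (u^(a+1))/Dp u a - (u^(b+1))/Dp u b - (u^(c+1))/Dp u c"
    by (simp add: B1_def corr_def del: power_Suc)
  show ?thesis unfolding det2 f00 f11 f01 f10 ..
qed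

lemma main_small: assumes b: "b \<ge> 1" and c: "c \<ge> 1" and u: "norm u < 1"
  shows "(1 - u^2) * det (mat (a+b+c+2) (a+b+c+2) (\<lambda>(i,j). Mf u a b c i j)) =
    (let X = u^(a+1); Y = u^(b+1); Z = u^(c+1) in
     -4*X^2*Y^2*Z^2 + Y^2*Z^2 + 2*X*Y*Z^2 + 2*X*Y^2*Z + X^2*Z^2 + X^2*Y^2 + 2*X^2*Y*Z - 2*Y*Z - 2*X*Z - 2*X*Y + 1)"
proof -
  have D: "\<And>r. Dp u r \<noteq> 0" using Dp_nz[OF u] by blast
  have K: "1 - u^2 \<noteq> 0"
  proof
    assume "1 - u^2 = 0"
    then have "u^2 = 1" by simp
    then have "norm (u^2) = 1" by simp
    then have "norm u ^ 2 = 1" by (simp add: norm_power)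
    moreover have "norm u ^ 2 < 1" using u by (subst power_less_one_iff) auto
    ultimately show False by simp
  qed
  have "mat (a+b+c+2) (a+b+c+2) (\<lambda>(i,j). Mf u a b c i j) = mat (a+b+c+2) (a+b+c+2) (\<lambda>(i,j). T3 u a b c i j)"
    by (rule mat_cong') (rule Mf_T3[OF b c])
  then have "det (mat (a+b+c+2) (a+b+c+2) (\<lambda>(i,j). Mf u a b c i j)) =
    Dp u a * Dp u b * Dp u c * det (mat 2 2 (\<lambda>(i,j). B1 u i j + corr u a i j + corr u b i j + corr u c i j))"
    using det_T3[OF b c D] by simp
  then show ?thesis unfolding det2_val Let_def
    using alg_id[OF K Dp_closed[of u a] Dp_closed[of u b] Dp_closed[of u c] D D D] by simp
qed

lemma pw: "e = (a+1)*i + (b+1)*j + (c+1)*k \<Longrightarrow> (u::complex)^e = (u^(a+1))^i * (u^(b+1))^j * (u^(c+1))^k"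
  by (simp only: power_add power_mult)

definition PMf :: "nat \<Rightarrow> nat \<Rightarrow> nat \<Rightarrow> nat \<Rightarrow> nat \<Rightarrow> complex poly" where
  "PMf a b c i j = (if i = j then (if i \<le> 1 then [:1,0,2:] else [:1,0,1:]) else if adj3 a b c i j then [:0,-1:] else 0)"

lemma poly_eval_mat:
  "map_mat (\<lambda>p. poly p u) (mat N N (\<lambda>(i,j). PMf a b c i j)) = mat N N (\<lambda>(i,j). Mf u a b c i j)"
  by (rule eq_matI) (auto simp: PMf_def Mf_def power2_eq_square algebra_simps)

lemma det_poly: "det (mat N N (\<lambda>(i,j). Mf u a b c i j)) = poly (det (mat N N (\<lambda>(i,j). PMf a b c i j))) u"
proof -
  interpret h: comm_ring_hom "\<lambda>p. poly p u"
    by unfold_locales (auto simp: poly_mult)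
  show ?thesis using h.hom_det[of "mat N N (\<lambda>(i,j). PMf a b c i j)"] unfolding poly_eval_mat .
qed

lemma infinite_disc: "infinite {x::complex. norm x < 1}"
proof
  assume fin: "finite {x::complex. norm x < 1}"
  let ?f = "\<lambda>k::nat. complex_of_real (1 / (real k + 2))"
  have "inj ?f" by (rule injI) (simp add: field_simps)
  moreover have "range ?f \<subseteq> {x::complex. norm x < 1}"
  proof
    fix x assume "x \<in> range ?f"
    then obtain k where k: "x = ?f k" by blast
    have "norm (?f k) = \<bar>1 / (real k + 2)\<bar>" by (rule norm_of_real)
    also have "\<dots> < 1" by simp
    finally show "x \<in> {x::complex. norm x < 1}" using k by simp
  qed
  ultimately have "finite (range ?f)" using fin finite_subset by blast
  then have "finite (UNIV :: nat set)" using \<open>inj ?f\<close> finite_imageD by blast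
  then show False by simp
qed

lemma poly_eq_disc:
  fixes P R :: "complex poly"
  assumes "\<And>u. norm u < 1 \<Longrightarrow> poly P u = poly R u"
  shows "P = R"
proof -
  have "{x. norm x < 1} \<subseteq> {x. poly (P - R) x = 0}" using assms by auto
  then have "infinite {x. poly (P - R) x = 0}" using infinite_disc finite_subset by blast
  then have "P - R = 0" using poly_roots_finite by blast
  then show ?thesis by simp
qed

theorem mainTheorem6:
  fixes m n p :: nat and u :: complex
  assumes "p > 0" and "m > max (p+1) 2" and "n > max (p+1) 2"
  shows "ihara_zeta_inv (Gmnp_vertices m n p) (Gmnp_edges m n p) u =
    - 4 * u^(2*m+2*n-2*p) + u^(2*m+2*n-4*p) + 2 * u^(m+2*n-2*p) + 2 * u^(2*m+n-2*p)
    + u^(2*n) + u^(2*m) + 2 * u^(m+n) - 2 * u^(m+n-2*p) - 2 * u^n - 2 * u^m + 1"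
proof -
  define a where "a = p - 1"
  define b where "b = m - p - 1"
  define c where "c = n - p - 1"
  have b: "b \<ge> 1" and c: "c \<ge> 1" using assms unfolding b_def c_def by auto
  have pe: "p = a+1" and me: "m = a+b+2" and ne: "n = a+c+2" using assms unfolding a_def b_def c_def by auto
  define RHS where "RHS = (\<lambda>u::complex. - 4 * u^(2*m+2*n-2*p) + u^(2*m+2*n-4*p) + 2 * u^(m+2*n-2*p) + 2 * u^(2*m+n-2*p)
    + u^(2*n) + u^(2*m) + 2 * u^(m+n) - 2 * u^(m+n-2*p) - 2 * u^n - 2 * u^m + 1)"
  have rhs: "RHS u = (let X = u^(a+1); Y = u^(b+1); Z = u^(c+1) in
     -4*X^2*Y^2*Z^2 + Y^2*Z^2 + 2*X*Y*Z^2 + 2*X*Y^2*Z + X^2*Z^2 + X^2*Y^2 + 2*X^2*Y*Z - 2*Y*Z - 2*X*Z - 2*X*Y + 1)" for u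
  proof -
    have e1: "u^(2*m+2*n-2*p) = (u^(a+1))^2 * (u^(b+1))^2 * (u^(c+1))^2" by (rule pw) (simp add: pe me ne)
    have e2: "u^(2*m+2*n-4*p) = (u^(a+1))^0 * (u^(b+1))^2 * (u^(c+1))^2" by (rule pw) (simp add: pe me ne)
    have e3: "u^(m+2*n-2*p) = (u^(a+1))^1 * (u^(b+1))^1 * (u^(c+1))^2" by (rule pw) (simp add: pe me ne)
    have e4: "u^(2*m+n-2*p) = (u^(a+1))^1 * (u^(b+1))^2 * (u^(c+1))^1" by (rule pw) (simp add: pe me ne)
    have e5: "u^(2*n) = (u^(a+1))^2 * (u^(b+1))^0 * (u^(c+1))^2" by (rule pw) (simp add: pe me ne)
    have e6: "u^(2*m) = (u^(a+1))^2 * (u^(b+1))^2 * (u^(c+1))^0" by (rule pw) (simp add: pe me ne)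
    have e7: "u^(m+n) = (u^(a+1))^2 * (u^(b+1))^1 * (u^(c+1))^1" by (rule pw) (simp add: pe me ne)
    have e8: "u^(m+n-2*p) = (u^(a+1))^0 * (u^(b+1))^1 * (u^(c+1))^1" by (rule pw) (simp add: pe me ne)
    have e9: "u^n = (u^(a+1))^1 * (u^(b+1))^0 * (u^(c+1))^1" by (rule pw) (simp add: pe me ne)
    have e10: "u^m = (u^(a+1))^1 * (u^(b+1))^1 * (u^(c+1))^0" by (rule pw) (simp add: pe me ne)
    show ?thesis unfolding RHS_def e1 e2 e3 e4 e5 e6 e7 e8 e9 e10 Let_def
      by (simp only: power_0 power_one_right mult_1_left mult_1_right) (simp add: mult_ac)
  qed
  define PM where "PM = mat (a+b+c+2) (a+b+c+2) (\<lambda>(i,j). PMf a b c i j)"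
  define RP where "RP = [:1,0,-1:] * det PM"
  have lhs: "ihara_zeta_inv (Gmnp_vertices m n p) (Gmnp_edges m n p) v = poly RP v" for v
  proof -
    have "ihara_zeta_inv (Gmnp_vertices m n p) (Gmnp_edges m n p) v
        = (1 - v^2) powi (int (a+b+c+3) - int (a+b+c+2)) * det (mat (a+b+c+2) (a+b+c+2) (\<lambda>(i,j). Mf v a b c i j))"
      unfolding ihara_zeta_inv_def pe me ne V3 card_E3[OF b c] matrix_eq[OF b c] ..
    also have "\<dots> = (1 - v^2) * poly (det PM) v" unfolding det_poly PM_def by simp
    also have "\<dots> = poly RP v" unfolding RP_def by (simp add: power2_eq_square algebra_simps)
    finally show ?thesis .
  qed
  define RR :: "complex poly" where "RR = - smult 4 (monom 1 (2*m+2*n-2*p)) + monom 1 (2*m+2*n-4*p) + smult 2 (monom 1 (m+2*n-2*p))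
    + smult 2 (monom 1 (2*m+n-2*p)) + monom 1 (2*n) + monom 1 (2*m) + smult 2 (monom 1 (m+n))
    - smult 2 (monom 1 (m+n-2*p)) - smult 2 (monom 1 n) - smult 2 (monom 1 m) + 1"
  have rr: "poly RR v = RHS v" for v :: complex unfolding RR_def RHS_def by (simp add: poly_monom)
  have "RP = RR"
  proof (rule poly_eq_disc)
    fix v :: complex assume v: "norm v < 1"
    have "poly RP v = (1 - v^2) * det (mat (a+b+c+2) (a+b+c+2) (\<lambda>(i,j). Mf v a b c i j))"
      unfolding RP_def PM_def det_poly by (simp add: power2_eq_square algebra_simps)
    also have "\<dots> = RHS v" unfolding rhs by (rule main_small[OF b c v])
    finally show "poly RP v = poly RR v" unfolding rr .
  qed
  then have "ihara_zeta_inv (Gmnp_vertices m n p) (Gmnp_edges m n p) u = RHS u" unfolding lhs rr[symmetric] by simp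
  then show ?thesis unfolding RHS_def .
qed

end
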